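(* Let $p\in\mathbb{R}[x_1,\dots,x_n]$. Then $\|p\|_{1,\mathrm{cheb}}-p\in\mathcal Q(1-x_1^2,\dots,1-x_n^2)_{2\deg(p)}$.
   Context: $\Sigma[x]_r$ is the cone of sums of squares of polynomials in $x=(x_1,\dots,x_n)$ of total degree at most $r$; $\mathcal Q(1-x_1^2,\dots,1-x_n^2)_r=\Sigma[x]_r+\sum_{i=1}^n(1-x_i^2)\Sigma[x]_{r-2}$. $T_k(x)=\cos(k\arccos x)$; for $\alpha\in\mathbb{N}_0^n$, $T_\alpha(x)=\prod_iT_{\alpha_i}(x_i)$; for $p=\sum_\alpha p_\alpha T_\alpha$, $\|p\|_{1,\mathrm{cheb}}=\sum_\alpha|p_\alpha|$. *)

theory Defs
  imports Complex_Main "HOL-Library.Poly_Mapping"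
begin

text \<open>Real multivariate polynomials in the variables x_0, x_1, ... (index nat),
  represented by their coefficients in the monomial basis: a monomial is a
  finitely supported exponent vector, a polynomial a
  finitely supported coefficient map.\<close>

type_synonym mpoly = "(nat \<Rightarrow>\<^sub>0 nat) \<Rightarrow>\<^sub>0 real"

definition mconst :: "real \<Rightarrow> mpoly" where
  "mconst c = Poly_Mapping.single 0 c"

definition mvar :: "nat \<Rightarrow> mpoly" where
  "mvar i = Poly_Mapping.single (Poly_Mapping.single i 1) 1"

text \<open>p involves only the variables x_0,...,x_(n-1), i.e. p lies in R[x_1..x_n].\<close>
definition mpoly_in :: "nat \<Rightarrow> mpoly \<Rightarrow> bool" where
  "mpoly_in n p \<longleftrightarrow> (\<forall>m\<in>Poly_Mapping.keys (p::mpoly). Poly_Mapping.keys (m::nat \<Rightarrow>\<^sub>0 nat) \<subseteq> {..<(n::nat)})"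

text \<open>Total degree (the zero polynomial gets degree 0).\<close>
definition mdeg :: "mpoly \<Rightarrow> nat" where
  "mdeg p = Max (insert 0 ((\<lambda>\<alpha>. \<Sum>i\<in>Poly_Mapping.keys \<alpha>. Poly_Mapping.lookup \<alpha> i) ` Poly_Mapping.keys p))"

fun cheb_var :: "nat \<Rightarrow> nat \<Rightarrow> mpoly" where
  "cheb_var i 0 = 1"
| "cheb_var i (Suc 0) = mvar i"
| "cheb_var i (Suc (Suc k)) = 2 * mvar i * cheb_var i (Suc k) - cheb_var i k"

definition cheb_multi :: "(nat \<Rightarrow>\<^sub>0 nat) \<Rightarrow> mpoly" where
  "cheb_multi \<alpha> = (\<Prod>i\<in>Poly_Mapping.keys \<alpha>. cheb_var i (Poly_Mapping.lookup \<alpha> i))"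

definition cheb_coeffs :: "mpoly \<Rightarrow> (nat \<Rightarrow>\<^sub>0 nat) \<Rightarrow>\<^sub>0 real" where
  "cheb_coeffs p = (THE c. p = (\<Sum>\<alpha>\<in>Poly_Mapping.keys c. mconst (Poly_Mapping.lookup c \<alpha>) * cheb_multi \<alpha>))"

definition cheb_norm1 :: "mpoly \<Rightarrow> real" where
  "cheb_norm1 p = (\<Sum>\<alpha>\<in>Poly_Mapping.keys (cheb_coeffs p). \<bar>Poly_Mapping.lookup (cheb_coeffs p) \<alpha>\<bar>)"

text \<open>Sigma[x]_r in n variables: sums of squares q^2 of polynomials q in
  x_1..x_n with deg(q^2) = 2 deg q \<le> r. For r < 0 only the empty sum 0.\<close>
definition sos_cone :: "nat \<Rightarrow> int \<Rightarrow> mpoly set" where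
  "sos_cone n r = {sum_list (map (\<lambda>q. q ^ 2) qs) | qs.
      \<forall>q\<in>set qs. mpoly_in n q \<and> 2 * int (mdeg q) \<le> r}"

definition quad_module :: "nat \<Rightarrow> int \<Rightarrow> mpoly set" where
  "quad_module n r = {s0 + (\<Sum>i<n. (1 - mvar i ^ 2) * s i) | s0 s.
      s0 \<in> sos_cone n r \<and> (\<forall>i<n. s i \<in> sos_cone n (r - 2))}"

end

theory Submission
  imports Defs
begin

abbreviation lk where "lk \<equiv> Poly_Mapping.lookup"
abbreviation ks where "ks \<equiv> Poly_Mapping.keys"
abbreviation sg where "sg \<equiv> Poly_Mapping.single"

lemma lookup_single_mult:
  fixes q :: "('a::cancel_comm_monoid_add \<Rightarrow>\<^sub>0 real)"
  shows "lk (sg m a * q) (m + g) = a * lk q g"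
proof -
  have "lk (sg m a * q) (m + g)
     = (\<Sum>l. (a when m = l) * (\<Sum>q'. lk q q' when m + g = l + q'))"
    by (simp add: lookup_mult lookup_single)
  also have "\<dots> = (\<Sum>l. (a * (\<Sum>q'. lk q q' when m + g = l + q')) when m = l)"
    by (simp add: when_mult)
  also have "\<dots> = a * (\<Sum>q'. lk q q' when m + g = m + q')"
    by simp
  also have "\<dots> = a * lk q g"
    by simp
  finally show ?thesis .
qed

lemma keys_single_mult:
  fixes q :: "('a::comm_monoid_add \<Rightarrow>\<^sub>0 real)"
  shows "ks (sg m a * q) \<subseteq> (\<lambda>g. m + g) ` ks q"
  using keys_mult[of "sg m a" q] by (auto split: if_splits)

definition mdg :: "(nat \<Rightarrow>\<^sub>0 nat) \<Rightarrow> nat" where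
  "mdg a = (\<Sum>i\<in>ks a. lk a i)"

lemma mdg_add: "mdg (a + b) = mdg a + mdg b"
  unfolding mdg_def by (rule setsum_keys_plus_distrib) auto

lemma mdg_single [simp]: "mdg (sg i k) = k"
  unfolding mdg_def by simp

lemma mdg_zero [simp]: "mdg 0 = 0"
  unfolding mdg_def by simp

lemma mdg_eq_0: "mdg a = 0 \<longleftrightarrow> a = 0"
proof
  assume "mdg a = 0"
  then have "\<forall>i\<in>ks a. lk a i = 0" unfolding mdg_def by simp
  then show "a = 0" by (metis keys_eq_empty lookup_not_eq_zero_eq_in_keys subsetI subset_empty)
qed simp

lemma mdeg_le_iff: "mdeg p \<le> d \<longleftrightarrow> (\<forall>m\<in>ks p. mdg m \<le> d)"
proof -
  have "mdeg p = Max (insert 0 (mdg ` ks p))" unfolding mdeg_def mdg_def by simp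
  then show ?thesis by simp
qed

lemma mdeg_ge: "m \<in> ks p \<Longrightarrow> mdg m \<le> mdeg p"
  using mdeg_le_iff by blast

lemma mdeg_add: "mdeg p \<le> d \<Longrightarrow> mdeg q \<le> d \<Longrightarrow> mdeg (p + q) \<le> d"
  unfolding mdeg_le_iff using keys_add[of p q] by blast

lemma mdeg_diff: "mdeg p \<le> d \<Longrightarrow> mdeg q \<le> d \<Longrightarrow> mdeg (p - q) \<le> d"
  unfolding mdeg_le_iff using keys_diff[of p q] by blast

lemma mdeg_uminus [simp]: "mdeg (- p) = mdeg p"
  unfolding mdeg_def by simp

lemma mdeg_mult: "mdeg p \<le> d1 \<Longrightarrow> mdeg q \<le> d2 \<Longrightarrow> mdeg (p * q) \<le> d1 + d2"
  unfolding mdeg_le_iff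
proof
  fix m assume A: "\<forall>m\<in>ks p. mdg m \<le> d1" "\<forall>m\<in>ks q. mdg m \<le> d2" and "m \<in> ks (p * q)"
  then obtain a b where "m = a + b" "a \<in> ks p" "b \<in> ks q" using keys_mult[of p q] by blast
  then show "mdg m \<le> d1 + d2" using A by (simp add: mdg_add add_mono)
qed

lemma mdeg_mconst [simp]: "mdeg (mconst c) = 0"
  unfolding mdeg_def mconst_def by simp

lemma mdeg_one [simp]: "mdeg 1 = 0"
  unfolding mdeg_def by simp

lemma mdeg_numeral [simp]: "mdeg (numeral k) = 0"
  using mdeg_mconst[of "numeral k"] unfolding mconst_def by simp

lemma mdeg_mvar: "mdeg (mvar i) \<le> 1"
  unfolding mdeg_le_iff mvar_def by simp

lemma mdeg_zero [simp]: "mdeg 0 = 0"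
  unfolding mdeg_def by simp

lemma mdeg_sum: "finite A \<Longrightarrow> (\<And>a. a \<in> A \<Longrightarrow> mdeg (f a) \<le> d) \<Longrightarrow> mdeg (sum f A) \<le> d"
  by (induction A rule: finite_induct) (auto intro: mdeg_add)

lemma mdeg_prod: "finite A \<Longrightarrow> (\<And>a. a \<in> A \<Longrightarrow> mdeg (f a) \<le> d a) \<Longrightarrow> mdeg (prod f A) \<le> sum d A"
proof (induction A rule: finite_induct)
  case (insert x F)
  then show ?case by (simp add: mdeg_mult)
qed simp

lemma mdeg_power: "mdeg p \<le> d \<Longrightarrow> mdeg (p ^ k) \<le> k * d"
proof (induction k)
  case (Suc k)
  then show ?case using mdeg_mult[of p d "p ^ k" "k * d"] by simp
qed simp

lemma mpoly_in_iff: "mpoly_in n p \<longleftrightarrow> (\<forall>m\<in>ks p. ks m \<subseteq> {..<n})"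
  unfolding mpoly_in_def by simp

lemma mpoly_in_add: "mpoly_in n p \<Longrightarrow> mpoly_in n q \<Longrightarrow> mpoly_in n (p + q)"
  unfolding mpoly_in_iff using keys_add[of p q] by blast

lemma mpoly_in_diff: "mpoly_in n p \<Longrightarrow> mpoly_in n q \<Longrightarrow> mpoly_in n (p - q)"
  unfolding mpoly_in_iff using keys_diff[of p q] by blast

lemma mpoly_in_uminus: "mpoly_in n p \<Longrightarrow> mpoly_in n (- p)"
  unfolding mpoly_in_iff by simp

lemma mpoly_in_mult: "mpoly_in n p \<Longrightarrow> mpoly_in n q \<Longrightarrow> mpoly_in n (p * q)"
  unfolding mpoly_in_iff
proof
  fix m assume A: "\<forall>m\<in>ks p. ks m \<subseteq> {..<n}" "\<forall>m\<in>ks q. ks m \<subseteq> {..<n}" and "m \<in> ks (p * q)"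
  then obtain a b where "m = a + b" "a \<in> ks p" "b \<in> ks q" using keys_mult[of p q] by blast
  then show "ks m \<subseteq> {..<n}" using A keys_add[of a b] by blast
qed

lemma mpoly_in_mconst [simp]: "mpoly_in n (mconst c)"
  unfolding mpoly_in_iff mconst_def by simp

lemma mpoly_in_one [simp]: "mpoly_in n 1"
  unfolding mpoly_in_iff by simp

lemma mpoly_in_zero [simp]: "mpoly_in n 0"
  unfolding mpoly_in_iff by simp

lemma mpoly_in_numeral [simp]: "mpoly_in n (numeral k)"
  using mpoly_in_mconst[of n "numeral k"] unfolding mconst_def by simp

lemma mpoly_in_mvar: "i < n \<Longrightarrow> mpoly_in n (mvar i)"
  unfolding mpoly_in_iff mvar_def by simp

lemma mpoly_in_sum: "(\<And>a. a \<in> A \<Longrightarrow> mpoly_in n (f a)) \<Longrightarrow> mpoly_in n (sum f A)"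
  by (induction A rule: infinite_finite_induct) (auto intro: mpoly_in_add)

lemma mpoly_in_prod: "(\<And>a. a \<in> A \<Longrightarrow> mpoly_in n (f a)) \<Longrightarrow> mpoly_in n (prod f A)"
  by (induction A rule: infinite_finite_induct) (auto intro: mpoly_in_mult)

lemma mpoly_in_power: "mpoly_in n p \<Longrightarrow> mpoly_in n (p ^ k)"
  by (induction k) (auto intro: mpoly_in_mult)

lemma mconst_add: "mconst (a + b) = mconst a + mconst b"
  unfolding mconst_def by (simp add: single_add)
lemma mconst_mult: "mconst (a * b) = mconst a * mconst b"
  unfolding mconst_def by (simp add: mult_single)
lemma mconst_uminus: "mconst (- a) = - mconst a"
  unfolding mconst_def by (simp add: single_uminus)
lemma mconst_diff: "mconst (a - b) = mconst a - mconst b"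
  unfolding mconst_def by (simp add: single_diff)
lemma mconst_0 [simp]: "mconst 0 = 0"
  unfolding mconst_def by simp
lemma mconst_1 [simp]: "mconst 1 = 1"
  unfolding mconst_def by simp
lemma mconst_sum: "mconst (sum f A) = (\<Sum>a\<in>A. mconst (f a))"
  by (induction A rule: infinite_finite_induct) (auto simp: mconst_add)
lemma lookup_mconst_mult: "lk (mconst c * q) g = c * lk q g"
  unfolding mconst_def using lookup_single_mult[of 0 c q g] by simp
lemma mconst_half: "2 * mconst (1/2) = 1"
proof -
  have "(2::mpoly) = mconst 2" unfolding mconst_def by simp
  then have "2 * mconst (1/2) = mconst (2 * (1/2))" by (simp only: mconst_mult)
  then show ?thesis by simp
qed

fun chT :: "'a::comm_ring_1 \<Rightarrow> nat \<Rightarrow> 'a" where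
  "chT x 0 = 1"
| "chT x (Suc 0) = x"
| "chT x (Suc (Suc k)) = 2 * x * chT x (Suc k) - chT x k"

fun chU :: "'a::comm_ring_1 \<Rightarrow> nat \<Rightarrow> 'a" where
  "chU x 0 = 1"
| "chU x (Suc 0) = 2 * x"
| "chU x (Suc (Suc k)) = 2 * x * chU x (Suc k) - chU x k"

lemma cheb_var_eq: "cheb_var i k = chT (mvar i) k"
  by (induction i k rule: cheb_var.induct) auto

lemma two_step:
  assumes "P 0" "P (Suc 0)" "\<And>m. P m \<Longrightarrow> P (Suc m) \<Longrightarrow> P (Suc (Suc m))"
  shows "P n"
proof -
  have "P n \<and> P (Suc n)"
    by (induction n) (use assms in auto)
  then show ?thesis by simp
qed

lemma aux_rel1:
  fixes x T1 T2 T3 U0 U1 :: "'a::comm_ring_1"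
  assumes "T2 = x*T1 + (x^2-1)*U0" "T3 = x*T2 + (x^2-1)*U1" "T3 = 2*x*T2 - T1"
  shows "2*x*T3 - T2 = x*T3 + (x^2-1)*(2*x*U1 - U0)"
proof -
  have "2*x*T3 - T2 - (x*T3 + (x^2-1)*(2*x*U1 - U0))
     = - x * (T3 - (2*x*T2 - T1)) + 2*x*(T3 - (x*T2 + (x^2-1)*U1)) - (T2 - (x*T1 + (x^2-1)*U0))"
    by (simp add: algebra_simps power2_eq_square)
  also have "\<dots> = 0"
  proof -
    have z0: "T3 - (2*x*T2 - T1) = 0" by (simp only: assms(3) diff_self)
    have z1: "T3 - (x*T2 + (x^2-1)*U1) = 0" by (simp only: assms(2) diff_self)
    have z2: "T2 - (x*T1 + (x^2-1)*U0) = 0" by (simp only: assms(1) diff_self)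
    show ?thesis by (simp only: z0 z1 z2) simp
  qed
  finally show ?thesis by (simp only: eq_iff_diff_eq_0[symmetric])
qed

lemma aux_rel2:
  fixes x T1 T2 T3 U0 U1 U2 :: "'a::comm_ring_1"
  assumes "U1 = T1 + x*U0" "U2 = T2 + x*U1" "T3 = 2*x*T2 - T1" "U2 = 2*x*U1 - U0"
  shows "2*x*U2 - U1 = T3 + x*U2"
proof -
  have "2*x*U2 - U1 - (T3 + x*U2)
     = - (T3 - (2*x*T2 - T1)) + 2*x*(U2 - (T2 + x*U1)) - (U1 - (T1 + x*U0)) - x * (U2 - (2*x*U1 - U0))"
    by (simp add: algebra_simps power2_eq_square)
  also have "\<dots> = 0"
  proof -
    have z0: "T3 - (2*x*T2 - T1) = 0" by (simp only: assms(3) diff_self)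
    have z1: "U2 - (T2 + x*U1) = 0" by (simp only: assms(2) diff_self)
    have z2: "U1 - (T1 + x*U0) = 0" by (simp only: assms(1) diff_self)
    have z3: "U2 - (2*x*U1 - U0) = 0" by (simp only: assms(4) diff_self)
    show ?thesis by (simp only: z0 z1 z2 z3) simp
  qed
  finally show ?thesis by (simp only: eq_iff_diff_eq_0[symmetric])
qed

lemma ch_rel1: "chT x (Suc (Suc k)) = x * chT x (Suc k) + (x^2 - 1) * chU x k"
proof (induction k rule: two_step)
  case 1
  then show ?case by (simp add: algebra_simps power2_eq_square)
next
  case 2
  then show ?case by (simp add: algebra_simps power2_eq_square)
next
  case (3 m)
  have r1: "chT x (Suc (Suc (Suc (Suc m)))) = 2 * x * chT x (Suc (Suc (Suc m))) - chT x (Suc (Suc m))"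
    by (rule chT.simps(3))
  have r2: "chT x (Suc (Suc (Suc m))) = 2 * x * chT x (Suc (Suc m)) - chT x (Suc m)"
    by (rule chT.simps(3))
  have r3: "chU x (Suc (Suc m)) = 2 * x * chU x (Suc m) - chU x m"
    by (rule chU.simps(3))
  show ?case unfolding r1 r3 using 3 r2 by (rule aux_rel1)
qed

lemma ch_rel2: "chU x (Suc k) = chT x (Suc k) + x * chU x k"
proof (induction k rule: two_step)
  case 1
  then show ?case by (simp add: algebra_simps)
next
  case 2
  then show ?case by (simp add: algebra_simps)
next
  case (3 m)
  have r1: "chU x (Suc (Suc (Suc m))) = 2 * x * chU x (Suc (Suc m)) - chU x (Suc m)"
    by (rule chU.simps(3))
  have r2: "chT x (Suc (Suc (Suc m))) = 2 * x * chT x (Suc (Suc m)) - chT x (Suc m)"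
    by (rule chT.simps(3))
  have r3: "chU x (Suc (Suc m)) = 2 * x * chU x (Suc m) - chU x m"
    by (rule chU.simps(3))
  show ?case unfolding r1 using 3 r2 r3 by (intro aux_rel2)
qed

lemma ch_pell: "(chT x (Suc k))^2 + (1 - x^2) * (chU x k)^2 = 1"
proof (induction k)
  case 0
  then show ?case by (simp add: algebra_simps)
next
  case (Suc k)
  have "(chT x (Suc (Suc k)))^2 + (1 - x^2) * (chU x (Suc k))^2
     = (x * chT x (Suc k) + (x^2 - 1) * chU x k)^2 + (1 - x^2) * (chT x (Suc k) + x * chU x k)^2"
    by (simp only: ch_rel1 ch_rel2)
  also have "\<dots> = (chT x (Suc k))^2 + (1 - x^2) * (chU x k)^2"
    by (simp add: algebra_simps power2_eq_square)
  finally show ?case using Suc by simp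
qed

lemma ch_deg:
  "mdeg (chT (mvar i) k) \<le> k \<and> mdeg (chU (mvar i) k) \<le> k \<and>
   (i < n \<longrightarrow> mpoly_in n (chT (mvar i) k) \<and> mpoly_in n (chU (mvar i) k))"
proof (induction k rule: two_step)
  case 1
  then show ?case by simp
next
  case 2
  then show ?case using mdeg_mvar[of i] mdeg_mult[of 2 0 "mvar i" 1]
    by (auto intro: mpoly_in_mult mpoly_in_mvar)
next
  case (3 m)
  have a: "mdeg (2 * mvar i * p) \<le> Suc (Suc m)" if "mdeg p \<le> Suc m" for p
    using mdeg_mult[OF mdeg_mult[OF _ mdeg_mvar, of 2 0 i] that] by simp
  have b: "mdeg p \<le> m \<Longrightarrow> mdeg p \<le> Suc (Suc m)" for p by simp
  show ?case using 3 a b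
    by (auto intro!: mdeg_diff mpoly_in_diff mpoly_in_mult mpoly_in_mvar)
qed

lemma cheb_multi_deg: "mdeg (cheb_multi a) \<le> mdg a"
  unfolding cheb_multi_def mdg_def cheb_var_eq
  by (rule mdeg_prod) (use ch_deg in auto)

lemma cheb_multi_in: "ks a \<subseteq> {..<n} \<Longrightarrow> mpoly_in n (cheb_multi a)"
  unfolding cheb_multi_def cheb_var_eq
  by (rule mpoly_in_prod) (use ch_deg in auto)

lemma cheb_multi_superset:
  assumes "finite S" "ks a \<subseteq> S"
  shows "cheb_multi a = (\<Prod>j\<in>S. cheb_var j (lk a j))"
  unfolding cheb_multi_def
  by (rule prod.mono_neutral_left) (use assms in \<open>auto simp: in_keys_iff\<close>)

lemma lk_plus_e: "lk (b + sg i (1::nat)) j = lk b j + (if i = j then 1 else 0)"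
  by (simp add: lookup_add lookup_single when_def)

lemma lk_minus_e: "lk (b - sg i (1::nat)) j = lk b j - (if i = j then 1 else 0)"
  by (simp add: lookup_minus lookup_single when_def)

lemmas lk_plus_e' = lk_plus_e[unfolded One_nat_def]
lemmas lk_minus_e' = lk_minus_e[unfolded One_nat_def]

lemma keys_plus_e: "ks (b + sg i (1::nat)) \<subseteq> insert i (ks b)"
  using keys_add[of b "sg i 1"] by auto

lemma keys_minus_e: "ks (b - sg i (1::nat)) \<subseteq> ks b"
proof
  fix x assume "x \<in> ks (b - sg i (1::nat))"
  then have "lk (b - sg i (1::nat)) x \<noteq> 0" by (simp add: in_keys_iff)
  moreover have "lk (b - sg i (1::nat)) x \<le> lk b x" by (simp only: lk_minus_e diff_le_self)
  ultimately show "x \<in> ks b" by (simp add: in_keys_iff)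
qed

lemma cheb_multi_split:
  assumes "ks a \<subseteq> insert i (ks b)" "\<And>j. j \<noteq> i \<Longrightarrow> lk a j = lk b j"
  shows "cheb_multi a = cheb_var i (lk a i) * (\<Prod>j\<in>ks b - {i}. cheb_var j (lk b j))"
proof -
  have "cheb_multi a = (\<Prod>j\<in>insert i (ks b). cheb_var j (lk a j))"
    by (rule cheb_multi_superset) (use assms in auto)
  also have "\<dots> = cheb_var i (lk a i) * (\<Prod>j\<in>ks b - {i}. cheb_var j (lk a j))"
    by (subst prod.insert_remove) auto
  also have "(\<Prod>j\<in>ks b - {i}. cheb_var j (lk a j)) = (\<Prod>j\<in>ks b - {i}. cheb_var j (lk b j))"
    by (rule prod.cong) (use assms in auto)
  finally show ?thesis .
qed

lemma cheb_multi_R1: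
  assumes "lk b i = 0"
  shows "cheb_multi (b + sg i 1) = mvar i * cheb_multi b"
proof -
  let ?P = "(\<Prod>j\<in>ks b - {i}. cheb_var j (lk b j))"
  have "cheb_multi (b + sg i 1) = cheb_var i (lk (b + sg i 1) i) * ?P"
    by (rule cheb_multi_split[OF keys_plus_e]) (simp only: lk_plus_e, simp)
  moreover have "cheb_multi b = cheb_var i (lk b i) * ?P"
    by (rule cheb_multi_split) auto
  moreover have "lk (b + sg i 1) i = 1"
    using assms by (simp only: lk_plus_e, simp)
  ultimately show ?thesis using assms by simp
qed

lemma cheb_multi_R2:
  assumes "lk b i \<noteq> 0"
  shows "cheb_multi (b + sg i 1) = 2 * mvar i * cheb_multi b - cheb_multi (b - sg i 1)"
proof -
  let ?P = "(\<Prod>j\<in>ks b - {i}. cheb_var j (lk b j))"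
  obtain k where k: "lk b i = Suc k" using assms not0_implies_Suc by blast
  have "cheb_multi (b + sg i 1) = cheb_var i (lk (b + sg i 1) i) * ?P"
    by (rule cheb_multi_split[OF keys_plus_e]) (simp only: lk_plus_e, simp)
  moreover have "cheb_multi b = cheb_var i (lk b i) * ?P"
    by (rule cheb_multi_split) auto
  moreover have "cheb_multi (b - sg i 1) = cheb_var i (lk (b - sg i 1) i) * ?P"
    by (rule cheb_multi_split) (rule subset_insertI2[OF keys_minus_e], simp add: lk_minus_e')
  moreover have "lk (b + sg i 1) i = Suc (Suc k)" "lk (b - sg i 1) i = k"
    using k by (simp_all add: lk_plus_e' lk_minus_e')
  ultimately show ?thesis using k by (simp add: algebra_simps)
qed

lemma split_e:
  fixes b :: "nat \<Rightarrow>\<^sub>0 nat"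
  assumes "i \<in> ks b"
  shows "b = (b - sg i 1) + sg i 1"
  by (rule poly_mapping_eqI) (use assms in \<open>auto simp: lookup_add lk_minus_e' lookup_single when_def in_keys_iff\<close>)

lemma mdg_split_e:
  assumes "i \<in> ks b"
  shows "mdg (b - sg i 1) < mdg b"
proof -
  have "mdg b = mdg (b - sg i 1) + 1"
    by (subst split_e[OF assms]) (simp add: mdg_add)
  then show ?thesis by simp
qed

definition mle :: "(nat \<Rightarrow>\<^sub>0 nat) \<Rightarrow> (nat \<Rightarrow>\<^sub>0 nat) \<Rightarrow> bool" where
  "mle g b \<longleftrightarrow> (\<exists>d. b = g + d)"

lemma mle_deg: "mle g b \<Longrightarrow> mdg g \<le> mdg b"
  unfolding mle_def by (auto simp: mdg_add)

lemma mle_deg_eq: "mle g b \<Longrightarrow> mdg b \<le> mdg g \<Longrightarrow> g = b"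
  unfolding mle_def by (auto simp: mdg_add mdg_eq_0)

lemma mvar_single: "mvar i = sg (sg i 1) 1"
  unfolding mvar_def ..

lemma two_mvar: "2 * mvar i = sg (sg i 1) 2"
proof -
  have "(2::mpoly) * sg (sg i 1) 1 = sg 0 2 * sg (sg i 1) 1" by (simp only: single_numeral)
  also have "\<dots> = sg (sg i 1) 2" by (simp only: mult_single add_0 mult_1_right)
  finally show ?thesis unfolding mvar_def .
qed

lemma cheb_multi_zero: "cheb_multi 0 = 1"
  unfolding cheb_multi_def by simp

lemma cheb_support:
  "(\<forall>g\<in>ks (cheb_multi b). mle g b) \<and> lk (cheb_multi b) b > 0"
proof (induction "mdg b" arbitrary: b rule: less_induct)
  case less
  show ?case
  proof (cases "b = 0")
    case True
    then show ?thesis by (simp add: cheb_multi_zero mle_def)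
  next
    case False
    then obtain i where i: "i \<in> ks b" by fastforce
    define b' where "b' = b - sg i 1"
    have bb: "b = b' + sg i 1" unfolding b'_def by (rule split_e[OF i])
    have lt: "mdg b' < mdg b" unfolding b'_def by (rule mdg_split_e[OF i])
    note IH1 = less(1)[OF lt]
    show ?thesis
    proof (cases "lk b' i = 0")
      case True
      have T: "cheb_multi b = sg (sg i 1) 1 * cheb_multi b'"
        using cheb_multi_R1[OF True] bb by (simp add: mvar_single)
      have A: "\<forall>g\<in>ks (cheb_multi b). mle g b"
      proof
        fix g assume "g \<in> ks (cheb_multi b)"
        then obtain g' where "g = sg i 1 + g'" "g' \<in> ks (cheb_multi b')"
          using keys_single_mult[of "sg i 1" 1 "cheb_multi b'"] T by auto
        then show "mle g b" using IH1 bb unfolding mle_def by (metis add.assoc add.commute)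
      qed
      have "lk (cheb_multi b) b = lk (cheb_multi b') b'"
        using lookup_single_mult[of "sg i 1" 1 "cheb_multi b'" b'] T bb by (simp add: add.commute)
      then show ?thesis using A IH1 by simp
    next
      case False
      define b'' where "b'' = b' - sg i 1"
      have i': "i \<in> ks b'" using False by (simp add: in_keys_iff)
      have bb': "b' = b'' + sg i 1" unfolding b''_def by (rule split_e[OF i'])
      have lt': "mdg b'' < mdg b" using mdg_split_e[OF i'] lt unfolding b''_def by simp
      note IH2 = less(1)[OF lt']
      have T: "cheb_multi b = sg (sg i 1) 2 * cheb_multi b' - cheb_multi b''"
        using cheb_multi_R2[OF False] bb unfolding b''_def by (simp add: two_mvar)
      have A: "\<forall>g\<in>ks (cheb_multi b). mle g b"
      proof
        fix g assume g: "g \<in> ks (cheb_multi b)"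
        then have "g \<in> ks (sg (sg i 1) 2 * cheb_multi b') \<or> g \<in> ks (cheb_multi b'')"
          using keys_diff[of "sg (sg i 1) 2 * cheb_multi b'" "cheb_multi b''"] T by auto
        then show "mle g b"
        proof
          assume "g \<in> ks (sg (sg i 1) 2 * cheb_multi b')"
          then obtain g' where "g = sg i 1 + g'" "g' \<in> ks (cheb_multi b')"
            using keys_single_mult[of "sg i 1" 2 "cheb_multi b'"] by auto
          then show "mle g b" using IH1 bb unfolding mle_def by (metis add.assoc add.commute)
        next
          assume "g \<in> ks (cheb_multi b'')"
          then show "mle g b" using IH2 bb bb' unfolding mle_def by (metis add.assoc)
        qed
      qed
      have z: "lk (cheb_multi b'') b = 0"
      proof (rule ccontr)
        assume "lk (cheb_multi b'') b \<noteq> 0"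
        then have "mle b b''" using IH2 by (simp add: in_keys_iff)
        then show False using mle_deg lt' by fastforce
      qed
      have "lk (cheb_multi b) b = 2 * lk (cheb_multi b') b'"
        using lookup_single_mult[of "sg i 1" 2 "cheb_multi b'" b'] T bb z
        by (simp add: add.commute lookup_minus)
      then show ?thesis using A IH1 by simp
    qed
  qed
qed

lemma cheb_indep:
  assumes "finite F" "(\<Sum>a\<in>F. mconst (f a) * cheb_multi a) = 0"
  shows "\<forall>a\<in>F. f a = 0"
proof (rule ccontr)
  assume "\<not> (\<forall>a\<in>F. f a = 0)"
  define G where "G = {a\<in>F. f a \<noteq> 0}"
  have G: "finite G" "G \<noteq> {}" using assms(1) \<open>\<not> _\<close> unfolding G_def by auto
  have "Max (mdg ` G) \<in> mdg ` G" using G by (intro Max_in) auto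
  then obtain a where aG: "a \<in> G" and amax: "mdg a = Max (mdg ` G)"
    by (metis imageE)
  have max: "mdg b \<le> mdg a" if "b \<in> G" for b
    using amax G that by simp
  have aF: "a \<in> F" and fa: "f a \<noteq> 0" using aG unfolding G_def by auto
  have "0 = lk (\<Sum>b\<in>F. mconst (f b) * cheb_multi b) a" using assms(2) by simp
  also have "\<dots> = (\<Sum>b\<in>F. f b * lk (cheb_multi b) a)"
    by (simp add: lookup_sum lookup_mconst_mult)
  also have "\<dots> = f a * lk (cheb_multi a) a + (\<Sum>b\<in>F - {a}. f b * lk (cheb_multi b) a)"
    using assms(1) aF by (simp add: sum.remove)
  also have "(\<Sum>b\<in>F - {a}. f b * lk (cheb_multi b) a) = 0"
  proof (rule sum.neutral, rule ballI)
    fix b assume b: "b \<in> F - {a}"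
    show "f b * lk (cheb_multi b) a = 0"
    proof (cases "f b = 0")
      case False
      then have "b \<in> G" using b unfolding G_def by auto
      then have "mdg b \<le> mdg a" by (rule max)
      have "lk (cheb_multi b) a = 0"
      proof (rule ccontr)
        assume "lk (cheb_multi b) a \<noteq> 0"
        then have "mle a b" using cheb_support[of b] by (simp add: in_keys_iff)
        then have "a = b" using \<open>mdg b \<le> mdg a\<close> by (rule mle_deg_eq)
        then show False using b by simp
      qed
      then show ?thesis by simp
    qed simp
  qed
  finally have "f a * lk (cheb_multi a) a = 0" by simp
  then show False using fa cheb_support[of a] by simp
qed

lemma cheb_coeffs_eq:
  assumes "p = (\<Sum>a\<in>ks c. mconst (lk c a) * cheb_multi a)"
  shows "cheb_coeffs p = c"
  unfolding cheb_coeffs_def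
proof (rule the_equality)
  show "p = (\<Sum>a\<in>ks c. mconst (lk c a) * cheb_multi a)" by (rule assms)
next
  fix d assume d: "p = (\<Sum>a\<in>ks d. mconst (lk d a) * cheb_multi a)"
  define F where "F = ks c \<union> ks d"
  have fin: "finite F" unfolding F_def by simp
  have ec: "(\<Sum>a\<in>ks c. mconst (lk c a) * cheb_multi a) = (\<Sum>a\<in>F. mconst (lk c a) * cheb_multi a)"
    by (rule sum.mono_neutral_left) (auto simp: F_def in_keys_iff)
  have ed: "(\<Sum>a\<in>ks d. mconst (lk d a) * cheb_multi a) = (\<Sum>a\<in>F. mconst (lk d a) * cheb_multi a)"
    by (rule sum.mono_neutral_left) (auto simp: F_def in_keys_iff)
  have "(\<Sum>a\<in>F. mconst (lk d a - lk c a) * cheb_multi a)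
      = (\<Sum>a\<in>F. mconst (lk d a) * cheb_multi a) - (\<Sum>a\<in>F. mconst (lk c a) * cheb_multi a)"
    by (simp add: mconst_diff left_diff_distrib sum_subtractf)
  also have "\<dots> = 0" using assms d ec ed by simp
  finally have "\<forall>a\<in>F. lk d a - lk c a = 0" by (rule cheb_indep[OF fin])
  then show "d = c"
    by (intro poly_mapping_eqI) (metis F_def UnI1 UnI2 eq_iff_diff_eq_0 not_in_keys_iff_lookup_eq_zero)
qed

definition Aset :: "nat \<Rightarrow> nat \<Rightarrow> (nat \<Rightarrow>\<^sub>0 nat) set" where
  "Aset n d = {a. ks a \<subseteq> {..<n} \<and> mdg a \<le> d}"

definition cspan :: "nat \<Rightarrow> nat \<Rightarrow> mpoly set" where
  "cspan n d = {q. \<exists>F f. finite F \<and> F \<subseteq> Aset n d \<and> q = (\<Sum>a\<in>F. mconst (f a) * cheb_multi a)}"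

lemma cspan_zero: "0 \<in> cspan n d"
  unfolding cspan_def by (rule CollectI, rule exI[of _ "{}"]) simp

lemma cspan_add:
  assumes "p \<in> cspan n d" "q \<in> cspan n d"
  shows "p + q \<in> cspan n d"
proof -
  obtain F f where F: "finite F" "F \<subseteq> Aset n d" "p = (\<Sum>a\<in>F. mconst (f a) * cheb_multi a)"
    using assms(1) unfolding cspan_def by blast
  obtain G g where G: "finite G" "G \<subseteq> Aset n d" "q = (\<Sum>a\<in>G. mconst (g a) * cheb_multi a)"
    using assms(2) unfolding cspan_def by blast
  define h where "h a = (if a \<in> F then f a else 0) + (if a \<in> G then g a else 0)" for a
  have "(\<Sum>a\<in>F \<union> G. mconst (h a) * cheb_multi a)
     = (\<Sum>a\<in>F \<union> G. mconst (if a \<in> F then f a else 0) * cheb_multi a)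
     + (\<Sum>a\<in>F \<union> G. mconst (if a \<in> G then g a else 0) * cheb_multi a)"
    unfolding h_def by (simp add: mconst_add distrib_right sum.distrib)
  also have "(\<Sum>a\<in>F \<union> G. mconst (if a \<in> F then f a else 0) * cheb_multi a) = p"
    unfolding F(3) by (rule sum.mono_neutral_cong_right) (use F G in auto)
  also have "(\<Sum>a\<in>F \<union> G. mconst (if a \<in> G then g a else 0) * cheb_multi a) = q"
    unfolding G(3) by (rule sum.mono_neutral_cong_right) (use F G in auto)
  finally show ?thesis unfolding cspan_def using F G
    by (intro CollectI exI[of _ "F \<union> G"] exI[of _ h]) auto
qed

lemma cspan_scale:
  assumes "q \<in> cspan n d"
  shows "mconst c * q \<in> cspan n d"
proof -
  obtain F f where F: "finite F" "F \<subseteq> Aset n d" "q = (\<Sum>a\<in>F. mconst (f a) * cheb_multi a)"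
    using assms(1) unfolding cspan_def by blast
  have "mconst c * q = (\<Sum>a\<in>F. mconst (c * f a) * cheb_multi a)"
    unfolding F(3) by (simp add: sum_distrib_left mconst_mult mult.assoc)
  then show ?thesis unfolding cspan_def using F
    by (intro CollectI exI[of _ F] exI[of _ "\<lambda>a. c * f a"]) simp
qed

lemma cspan_sum:
  "(\<And>x. x \<in> S \<Longrightarrow> g x \<in> cspan n d) \<Longrightarrow> sum g S \<in> cspan n d"
  by (induction S rule: infinite_finite_induct) (auto intro: cspan_zero cspan_add)

lemma cspan_T: "a \<in> Aset n d \<Longrightarrow> cheb_multi a \<in> cspan n d"
  unfolding cspan_def by (intro CollectI exI[of _ "{a}"] exI[of _ "\<lambda>_. 1"]) simp

lemma Aset_mono: "d \<le> d' \<Longrightarrow> Aset n d \<subseteq> Aset n d'"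
  unfolding Aset_def by auto

lemma cspan_mono:
  assumes "d \<le> d'" shows "cspan n d \<subseteq> cspan n d'"
proof
  fix q assume "q \<in> cspan n d"
  then obtain F f where F: "finite F" "F \<subseteq> Aset n d" "q = (\<Sum>a\<in>F. mconst (f a) * cheb_multi a)"
    unfolding cspan_def by blast
  have "F \<subseteq> Aset n d'" using F(2) Aset_mono[OF assms, of n] by (rule order_trans)
  then show "q \<in> cspan n d'" unfolding cspan_def using F(1,3) by blast
qed

lemma cspan_mvar_T:
  assumes "i < n" "a \<in> Aset n d"
  shows "mvar i * cheb_multi a \<in> cspan n (Suc d)"
proof -
  have ap: "a + sg i 1 \<in> Aset n (Suc d)"
    using assms keys_plus_e[of a i] unfolding Aset_def by (auto simp: mdg_add)
  show ?thesis
  proof (cases "lk a i = 0")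
    case True
    then show ?thesis using cspan_T[OF ap] cheb_multi_R1[OF True] by simp
  next
    case False
    have am: "a - sg i 1 \<in> Aset n (Suc d)"
    proof -
      have "i \<in> ks a" using False by (simp add: in_keys_iff)
      then have "mdg (a - sg i 1) < mdg a" by (rule mdg_split_e)
      then show ?thesis using assms keys_minus_e[of a i] unfolding Aset_def by auto
    qed
    have "2 * (mvar i * cheb_multi a) = cheb_multi (a + sg i 1) + cheb_multi (a - sg i 1)"
      using cheb_multi_R2[OF False] by (simp add: algebra_simps)
    then have "mconst (1/2) * (2 * (mvar i * cheb_multi a)) = mconst (1/2) * (cheb_multi (a + sg i 1) + cheb_multi (a - sg i 1))"
      by simp
    moreover have "mconst (1/2) * (2 * (mvar i * cheb_multi a)) = mvar i * cheb_multi a"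
      using mconst_half by (simp add: mult.assoc[symmetric] mult.commute[of "mconst (1/2)"])
    ultimately show ?thesis
      using cspan_scale[OF cspan_add[OF cspan_T[OF ap] cspan_T[OF am]], of "1/2"] by simp
  qed
qed

lemma cspan_mvar:
  assumes "i < n" "q \<in> cspan n d"
  shows "mvar i * q \<in> cspan n (Suc d)"
proof -
  obtain F f where F: "finite F" "F \<subseteq> Aset n d" "q = (\<Sum>a\<in>F. mconst (f a) * cheb_multi a)"
    using assms(2) unfolding cspan_def by blast
  have "mvar i * q = (\<Sum>a\<in>F. mconst (f a) * (mvar i * cheb_multi a))"
    unfolding F(3) by (simp add: sum_distrib_left mult.left_commute)
  also have "\<dots> \<in> cspan n (Suc d)"
    using F(2) by (intro cspan_sum cspan_scale cspan_mvar_T[OF assms(1)]) auto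
  finally show ?thesis .
qed

lemma cspan_monomial:
  "ks a \<subseteq> {..<n} \<Longrightarrow> sg a 1 \<in> cspan n (mdg a)"
proof (induction "mdg a" arbitrary: a rule: less_induct)
  case less
  show ?case
  proof (cases "a = 0")
    case True
    then show ?thesis using cspan_T[of 0 n 0] by (simp add: cheb_multi_zero Aset_def)
  next
    case False
    then obtain i where i: "i \<in> ks a" by fastforce
    define a' where "a' = a - sg i 1"
    have aa: "a = a' + sg i 1" unfolding a'_def by (rule split_e[OF i])
    have da: "mdg a = Suc (mdg a')" using aa by (metis mdg_add mdg_single add.commute plus_1_eq_Suc)
    have ka: "ks a' \<subseteq> {..<n}" using keys_minus_e[of a i] less(2) unfolding a'_def by blast
    have "sg a' 1 \<in> cspan n (mdg a')" using less(1)[of a'] da ka by simp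
    then have "mvar i * sg a' 1 \<in> cspan n (Suc (mdg a'))"
      using i less(2) by (intro cspan_mvar) auto
    moreover have "mvar i * sg a' 1 = sg a 1"
      unfolding mvar_def by (simp add: mult_single aa add.commute)
    ultimately show ?thesis using da by simp
  qed
qed

lemma poly_decomp: "p = (\<Sum>m\<in>ks p. mconst (lk p m) * sg m 1)"
proof (rule poly_mapping_eqI)
  fix k
  have "lk (\<Sum>m\<in>ks p. mconst (lk p m) * sg m 1) k = (\<Sum>m\<in>ks p. lk p m * (if m = k then 1 else 0))"
    by (simp add: lookup_sum lookup_mconst_mult lookup_single when_def)
  also have "\<dots> = (\<Sum>m\<in>ks p. if m = k then lk p m else 0)"
    by (rule sum.cong) auto
  also have "\<dots> = lk p k"
    by (simp only: sum.delta finite_keys) (simp add: in_keys_iff)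
  finally show "lk p k = lk (\<Sum>m\<in>ks p. mconst (lk p m) * sg m 1) k" by simp
qed

lemma exists_cspan:
  assumes "mpoly_in n p"
  shows "p \<in> cspan n (mdeg p)"
proof -
  have "(\<Sum>m\<in>ks p. mconst (lk p m) * sg m 1) \<in> cspan n (mdeg p)"
  proof (rule cspan_sum)
    fix m assume m: "m \<in> ks p"
    have "sg m 1 \<in> cspan n (mdg m)" using assms m unfolding mpoly_in_iff by (intro cspan_monomial) auto
    then have "sg m 1 \<in> cspan n (mdeg p)" using cspan_mono[OF mdeg_ge[OF m]] by blast
    then show "mconst (lk p m) * sg m 1 \<in> cspan n (mdeg p)" by (rule cspan_scale)
  qed
  then show ?thesis using poly_decomp[of p] by simp
qed

lemma cspan_coeffs:
  assumes "q \<in> cspan n d"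
  shows "\<exists>c. ks c \<subseteq> Aset n d \<and> q = (\<Sum>a\<in>ks c. mconst (lk c a) * cheb_multi a)"
proof -
  obtain F f where F: "finite F" "F \<subseteq> Aset n d" "q = (\<Sum>a\<in>F. mconst (f a) * cheb_multi a)"
    using assms unfolding cspan_def by blast
  define g where "g a = (if a \<in> F then f a else 0)" for a
  have fin: "finite {a. g a \<noteq> 0}" using F(1) unfolding g_def by (rule rev_finite_subset) (auto split: if_splits)
  define c where "c = Abs_poly_mapping g"
  have lc: "lk c = g" unfolding c_def using fin by simp
  have kc: "ks c = {a\<in>F. f a \<noteq> 0}" by (auto simp: in_keys_iff lc g_def split: if_splits)
  have "q = (\<Sum>a\<in>ks c. mconst (lk c a) * cheb_multi a)"
    unfolding F(3) kc lc
    by (rule sum.mono_neutral_cong_right) (use F(1) in \<open>auto simp: g_def\<close>)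
  moreover have "ks c \<subseteq> Aset n d" using kc F(2) by auto
  ultimately show ?thesis by blast
qed

lemma sos_zero: "0 \<in> sos_cone n r"
  unfolding sos_cone_def by (intro CollectI exI[of _ "[]"]) simp

lemma sos_add:
  assumes "x \<in> sos_cone n r" "y \<in> sos_cone n r"
  shows "x + y \<in> sos_cone n r"
proof -
  obtain qs where qs: "x = sum_list (map (\<lambda>q. q ^ 2) qs)" "\<forall>q\<in>set qs. mpoly_in n q \<and> 2 * int (mdeg q) \<le> r"
    using assms(1) unfolding sos_cone_def by blast
  obtain ts where ts: "y = sum_list (map (\<lambda>q. q ^ 2) ts)" "\<forall>q\<in>set ts. mpoly_in n q \<and> 2 * int (mdeg q) \<le> r"
    using assms(2) unfolding sos_cone_def by blast
  have "x + y = sum_list (map (\<lambda>q. q ^ 2) (qs @ ts))" using qs ts by simp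
  then show ?thesis unfolding sos_cone_def using qs ts
    by (intro CollectI exI[of _ "qs @ ts"]) auto
qed

lemma sos_sq:
  assumes "mpoly_in n q" "2 * int (mdeg q) \<le> r"
  shows "q ^ 2 \<in> sos_cone n r"
  unfolding sos_cone_def using assms by (intro CollectI exI[of _ "[q]"]) auto

lemma sos_mono:
  assumes "r \<le> r'" "x \<in> sos_cone n r"
  shows "x \<in> sos_cone n r'"
proof -
  obtain qs where qs: "x = sum_list (map (\<lambda>q. q ^ 2) qs)" "\<forall>q\<in>set qs. mpoly_in n q \<and> 2 * int (mdeg q) \<le> r"
    using assms(2) unfolding sos_cone_def by blast
  then show ?thesis unfolding sos_cone_def using assms(1)
    by (intro CollectI exI[of _ qs]) auto
qed

lemma sum_list_sq_mult:
  "sum_list (map (\<lambda>t. t ^ 2) (map (\<lambda>t. q * t) qs)) = q ^ 2 * sum_list (map (\<lambda>t. t ^ 2) qs)"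
  for q :: mpoly
  by (induction qs) (auto simp: algebra_simps power2_eq_square)

lemma sos_mult_sq:
  assumes "x \<in> sos_cone n r" "mpoly_in n q"
  shows "q ^ 2 * x \<in> sos_cone n (r + 2 * int (mdeg q))"
proof -
  obtain qs where qs: "x = sum_list (map (\<lambda>q. q ^ 2) qs)" "\<forall>q\<in>set qs. mpoly_in n q \<and> 2 * int (mdeg q) \<le> r"
    using assms(1) unfolding sos_cone_def by blast
  have "\<forall>t\<in>set (map (\<lambda>t. q * t) qs). mpoly_in n t \<and> 2 * int (mdeg t) \<le> r + 2 * int (mdeg q)"
  proof
    fix t assume "t \<in> set (map (\<lambda>t. q * t) qs)"
    then obtain u where u: "u \<in> set qs" "t = q * u" by auto
    have "mdeg t \<le> mdeg q + mdeg u" using u(2) mdeg_mult[of q "mdeg q" u "mdeg u"] by simp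
    then show "mpoly_in n t \<and> 2 * int (mdeg t) \<le> r + 2 * int (mdeg q)"
      using u qs(2) assms(2) by (auto intro: mpoly_in_mult)
  qed
  moreover have "q ^ 2 * x = sum_list (map (\<lambda>t. t ^ 2) (map (\<lambda>t. q * t) qs))"
    using qs(1) sum_list_sq_mult by simp
  ultimately show ?thesis unfolding sos_cone_def by blast
qed

lemma qm_intro:
  assumes "s0 \<in> sos_cone n r" "\<And>i. i < n \<Longrightarrow> s i \<in> sos_cone n (r - 2)"
  shows "s0 + (\<Sum>i<n. (1 - mvar i ^ 2) * s i) \<in> quad_module n r"
  unfolding quad_module_def using assms by blast

lemma qm_elim:
  assumes "x \<in> quad_module n r"
  obtains s0 s where "s0 \<in> sos_cone n r" "\<And>i. i < n \<Longrightarrow> s i \<in> sos_cone n (r - 2)"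
    "x = s0 + (\<Sum>i<n. (1 - mvar i ^ 2) * s i)"
  using assms unfolding quad_module_def by blast

lemma qm_add:
  assumes "x \<in> quad_module n r" "y \<in> quad_module n r"
  shows "x + y \<in> quad_module n r"
proof -
  obtain s0 s where A: "s0 \<in> sos_cone n r" "\<And>i. i < n \<Longrightarrow> s i \<in> sos_cone n (r - 2)"
    "x = s0 + (\<Sum>i<n. (1 - mvar i ^ 2) * s i)" using assms(1) by (rule qm_elim) blast
  obtain t0 t where B: "t0 \<in> sos_cone n r" "\<And>i. i < n \<Longrightarrow> t i \<in> sos_cone n (r - 2)"
    "y = t0 + (\<Sum>i<n. (1 - mvar i ^ 2) * t i)" using assms(2) by (rule qm_elim) blast
  have "x + y = (s0 + t0) + (\<Sum>i<n. (1 - mvar i ^ 2) * (s i + t i))"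
    unfolding A(3) B(3) by (simp add: distrib_left sum.distrib)
  also have "\<dots> \<in> quad_module n r"
    by (rule qm_intro) (use A B in \<open>auto intro: sos_add\<close>)
  finally show ?thesis .
qed

lemma qm_zero: "0 \<in> quad_module n r"
  using qm_intro[of 0 n r "\<lambda>_. 0"] by (simp add: sos_zero)

lemma qm_sum:
  "(\<And>x. x \<in> S \<Longrightarrow> g x \<in> quad_module n r) \<Longrightarrow> sum g S \<in> quad_module n r"
  by (induction S rule: infinite_finite_induct) (auto intro: qm_zero qm_add)

lemma qm_sos: "x \<in> sos_cone n r \<Longrightarrow> x \<in> quad_module n r"
  using qm_intro[of x n r "\<lambda>_. 0"] by (simp add: sos_zero)

lemma qm_gen:
  assumes "i < n" "s \<in> sos_cone n (r - 2)"
  shows "(1 - mvar i ^ 2) * s \<in> quad_module n r"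
proof -
  have "(\<Sum>j<n. (1 - mvar j ^ 2) * (if j = i then s else 0)) = (1 - mvar i ^ 2) * s"
  proof -
    have "(\<Sum>j<n. (1 - mvar j ^ 2) * (if j = i then s else 0)) = (\<Sum>j<n. if j = i then (1 - mvar j ^ 2) * s else 0)"
      by (rule sum.cong) auto
    also have "\<dots> = (1 - mvar i ^ 2) * s" using assms(1) by (simp add: sum.delta')
    finally show ?thesis .
  qed
  moreover have "0 + (\<Sum>j<n. (1 - mvar j ^ 2) * (if j = i then s else 0)) \<in> quad_module n r"
    by (rule qm_intro) (use assms in \<open>auto intro: sos_zero\<close>)
  ultimately show ?thesis by simp
qed

lemma qm_mono:
  assumes "r \<le> r'" "x \<in> quad_module n r"
  shows "x \<in> quad_module n r'"
proof -
  obtain s0 s where A: "s0 \<in> sos_cone n r" "\<And>i. i < n \<Longrightarrow> s i \<in> sos_cone n (r - 2)"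
    "x = s0 + (\<Sum>i<n. (1 - mvar i ^ 2) * s i)" using assms(2) by (rule qm_elim) blast
  show ?thesis unfolding A(3)
  proof (rule qm_intro)
    show "s0 \<in> sos_cone n r'" using sos_mono[OF assms(1) A(1)] .
    fix i assume "i < n"
    show "s i \<in> sos_cone n (r' - 2)" using sos_mono[of "r - 2" "r' - 2", OF _ A(2)[OF \<open>i < n\<close>]] assms(1) by simp
  qed
qed

lemma qm_mult_sq:
  assumes "x \<in> quad_module n r" "mpoly_in n q"
  shows "q ^ 2 * x \<in> quad_module n (r + 2 * int (mdeg q))"
proof -
  obtain s0 s where A: "s0 \<in> sos_cone n r" "\<And>i. i < n \<Longrightarrow> s i \<in> sos_cone n (r - 2)"
    "x = s0 + (\<Sum>i<n. (1 - mvar i ^ 2) * s i)" using assms(1) by (rule qm_elim) blast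
  have "q ^ 2 * x = q ^ 2 * s0 + (\<Sum>i<n. (1 - mvar i ^ 2) * (q ^ 2 * s i))"
    unfolding A(3) by (simp add: distrib_left sum_distrib_left mult.left_commute)
  also have "\<dots> \<in> quad_module n (r + 2 * int (mdeg q))"
  proof (rule qm_intro)
    show "q ^ 2 * s0 \<in> sos_cone n (r + 2 * int (mdeg q))" by (rule sos_mult_sq[OF A(1) assms(2)])
    fix i assume "i < n"
    have "q ^ 2 * s i \<in> sos_cone n (r - 2 + 2 * int (mdeg q))"
      by (rule sos_mult_sq[OF A(2)[OF \<open>i < n\<close>] assms(2)])
    then show "q ^ 2 * s i \<in> sos_cone n (r + 2 * int (mdeg q) - 2)" by (simp add: algebra_simps)
  qed
  finally show ?thesis .
qed

lemma qm_scale: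
  assumes "c \<ge> 0" "x \<in> quad_module n r"
  shows "mconst c * x \<in> quad_module n r"
proof -
  have "mconst c = (mconst (sqrt c)) ^ 2"
    using assms(1) by (simp add: power2_eq_square flip: mconst_mult)
  then show ?thesis using qm_mult_sq[OF assms(2) mpoly_in_mconst[of n "sqrt c"]] by simp
qed

lemma one_minus_sq_var:
  assumes "i < n"
  shows "1 - (cheb_var i k)^2 \<in> quad_module n (2 * int k)"
proof (cases k)
  case 0
  then show ?thesis by (simp add: qm_zero)
next
  case (Suc k')
  let ?x = "mvar i"
  have pell: "(chT ?x (Suc k'))^2 + (1 - ?x^2) * (chU ?x k')^2 = 1" by (rule ch_pell)
  then have eq: "1 - (cheb_var i k)^2 = (1 - ?x^2) * (chU ?x k')^2"
    unfolding Suc cheb_var_eq by (simp add: algebra_simps)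
  have "(chU ?x k')^2 \<in> sos_cone n (2 * int k - 2)"
    by (rule sos_sq) (use ch_deg[of i k' n] assms Suc in auto)
  then show ?thesis unfolding eq by (rule qm_gen[OF assms])
qed

lemma one_minus_sq_prod:
  assumes "finite S" "S \<subseteq> {..<n}"
  shows "1 - (\<Prod>j\<in>S. cheb_var j (f j))^2 \<in> quad_module n (2 * int (\<Sum>j\<in>S. f j))"
  using assms
proof (induction S rule: finite_induct)
  case empty
  then show ?case by (simp add: qm_zero)
next
  case (insert j S)
  let ?t = "cheb_var j (f j)"
  let ?P = "\<Prod>j\<in>S. cheb_var j (f j)"
  have j: "j < n" using insert by auto
  have eq: "1 - (\<Prod>j\<in>insert j S. cheb_var j (f j))^2 = (1 - ?t^2) + ?t^2 * (1 - ?P^2)"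
    using insert by (simp add: algebra_simps power2_eq_square)
  have a: "1 - ?t^2 \<in> quad_module n (2 * int (\<Sum>j\<in>insert j S. f j))"
    by (rule qm_mono[OF _ one_minus_sq_var[OF j]]) (use insert in \<open>simp add: sum_nonneg\<close>)
  have tin: "mpoly_in n ?t" using ch_deg[of j "f j" n] j by (simp add: cheb_var_eq)
  have tdeg: "mdeg ?t \<le> f j" using ch_deg[of j "f j" n] by (simp add: cheb_var_eq)
  have "?t^2 * (1 - ?P^2) \<in> quad_module n (2 * int (\<Sum>j\<in>S. f j) + 2 * int (mdeg ?t))"
    by (rule qm_mult_sq[OF _ tin]) (use insert in auto)
  then have b: "?t^2 * (1 - ?P^2) \<in> quad_module n (2 * int (\<Sum>j\<in>insert j S. f j))"
    by (rule qm_mono[rotated]) (use insert tdeg in simp)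
  show ?case unfolding eq by (rule qm_add[OF a b])
qed

lemma one_minus_sq_multi:
  assumes "ks a \<subseteq> {..<n}"
  shows "1 - (cheb_multi a)^2 \<in> quad_module n (2 * int (mdg a))"
  unfolding cheb_multi_def mdg_def by (rule one_minus_sq_prod) (use assms in auto)

lemma one_pm_multi:
  assumes "ks a \<subseteq> {..<n}" "s = 1 \<or> s = -1"
  shows "1 + s * cheb_multi a \<in> quad_module n (2 * int (mdg a))"
proof -
  let ?T = "cheb_multi a"
  have s2: "s * s = 1" using assms(2) by auto
  have "(1 + s * ?T)^2 + (1 - ?T^2) = 2 * (1 + s * ?T)"
  proof -
    have "(1 + s * ?T)^2 + (1 - ?T^2) = 2 + 2 * s * ?T + (s * s) * ?T^2 - ?T^2"
      by (simp add: algebra_simps power2_eq_square)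
    also have "\<dots> = 2 * (1 + s * ?T)" using s2 by (simp add: algebra_simps)
    finally show ?thesis .
  qed
  then have eq: "mconst (1/2) * ((1 + s * ?T)^2 + (1 - ?T^2)) = 1 + s * ?T"
  proof -
    assume h: "(1 + s * ?T)^2 + (1 - ?T^2) = 2 * (1 + s * ?T)"
    have "mconst (1/2) * ((1 + s * ?T)^2 + (1 - ?T^2)) = mconst (1/2) * (2 * (1 + s * ?T))"
      by (simp only: h)
    also have "\<dots> = (2 * mconst (1/2)) * (1 + s * ?T)"
      by (simp only: mult.assoc[symmetric] mult.commute[of "mconst (1/2)" 2])
    also have "\<dots> = 1 + s * ?T" by (simp only: mconst_half mult_1)
    finally show ?thesis .
  qed
  have sin: "mpoly_in n (s * ?T)" using assms(2) cheb_multi_in[OF assms(1)]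
    by (auto intro: mpoly_in_uminus)
  have din: "mpoly_in n (1 + s * ?T)" using sin by (intro mpoly_in_add) simp_all
  have sd: "mdeg (s * ?T) \<le> mdg a" using assms(2) cheb_multi_deg[of a] by auto
  have dd: "mdeg (1 + s * ?T) \<le> mdg a" using sd by (intro mdeg_add) simp_all
  have "(1 + s * ?T)^2 \<in> sos_cone n (2 * int (mdg a))"
    by (rule sos_sq[OF din]) (use dd in simp)
  then have "(1 + s * ?T)^2 + (1 - ?T^2) \<in> quad_module n (2 * int (mdg a))"
    by (intro qm_add qm_sos one_minus_sq_multi assms(1))
  then have "mconst (1/2) * ((1 + s * ?T)^2 + (1 - ?T^2)) \<in> quad_module n (2 * int (mdg a))"
    by (rule qm_scale[rotated]) simp
  then show ?thesis by (simp only: eq)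
qed

theorem corollary3:
  fixes n :: nat and p :: mpoly
  assumes "mpoly_in n p"
  shows "mconst (cheb_norm1 p) - p \<in> quad_module n (2 * int (mdeg p))"
proof -
  obtain c where c: "ks c \<subseteq> Aset n (mdeg p)" and pc: "p = (\<Sum>a\<in>ks c. mconst (lk c a) * cheb_multi a)"
    using cspan_coeffs[OF exists_cspan[OF assms]] by blast
  have cc: "cheb_coeffs p = c" by (rule cheb_coeffs_eq[OF pc])
  have "mconst (cheb_norm1 p) - p = (\<Sum>a\<in>ks c. mconst \<bar>lk c a\<bar> - mconst (lk c a) * cheb_multi a)"
    unfolding cheb_norm1_def cc mconst_sum by (subst pc) (simp add: sum_subtractf)
  also have "\<dots> \<in> quad_module n (2 * int (mdeg p))"
  proof (rule qm_sum)
    fix a assume a: "a \<in> ks c"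
    have ka: "ks a \<subseteq> {..<n}" and da: "mdg a \<le> mdeg p" using c a unfolding Aset_def by auto
    show "mconst \<bar>lk c a\<bar> - mconst (lk c a) * cheb_multi a \<in> quad_module n (2 * int (mdeg p))"
    proof (cases "lk c a \<ge> 0")
      case True
      have "mconst \<bar>lk c a\<bar> - mconst (lk c a) * cheb_multi a = mconst (lk c a) * (1 + (-1) * cheb_multi a)"
        using True by (simp add: algebra_simps)
      moreover have "1 + (-1) * cheb_multi a \<in> quad_module n (2 * int (mdeg p))"
        by (rule qm_mono[OF _ one_pm_multi[OF ka]]) (use da in auto)
      ultimately show ?thesis using True qm_scale by simp
    next
      case False
      have "mconst \<bar>lk c a\<bar> - mconst (lk c a) * cheb_multi a = mconst (- lk c a) * (1 + 1 * cheb_multi a)"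
        using False by (simp add: algebra_simps mconst_uminus)
      moreover have "1 + 1 * cheb_multi a \<in> quad_module n (2 * int (mdeg p))"
        by (rule qm_mono[OF _ one_pm_multi[OF ka]]) (use da in auto)
      ultimately show ?thesis using False qm_scale by simp
    qed
  qed
  finally show ?thesis .
qed

end
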